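(* The $R$-linear map $\kappa:V^*\to V^{\otimes n-1}$ defined by \[ v_i^*\mapsto (-q)^i\sum_{w\in\mathfrak S_{n-1}}(-q)^{l(w)}v_{(1,2,\ldots,\hat i,\ldots,n).w}\qquad(1\le i\le n) \] is a well-defined monomorphism of $\mathbf U'$-modules. (Here $(1,\ldots,\hat i,\ldots,n)$ is the multi-index of length $n-1$ obtained by omitting $i$.)
   Context: $R$ commutative ring with $1$, $q\in R$ invertible, $n\ge 1$. $\mathbf U'$ is the $R$-form (obtained by base change $\mathbb Z[q,q^{-1}]\to R$, $q\mapsto q$) of the $\mathbb Z[q,q^{-1}]$-subalgebra of $U_q(\mathfrak{gl}_n)$ generated by the $K_i=q^{h_i-h_{i+1}}$ and the divided powers $e_i^{(l)}=e_i^l/[l]_q!$, $f_i^{(l)}=f_i^l/[l]_q!$ ($1\le i\le n-1$, $l\ge 0$, $[l]_q=\sum_{t=0}^{l-1}q^{2t-l+1}$); it is a sub-Hopf algebra of the analogous $R$-form $\mathbf U$ of $U_q(\mathfrak{gl}_n)$, with $\Delta(K_i)=K_i\otimes K_i$, $\Delta(e_i)=e_i\otimes K_i^{-1}+1\otimes e_i$, $\Delta(f_i)=f_i\otimes 1+K_i\otimes f_i$, $S(K_i)=K_i^{-1}$, $S(e_i)=-e_iK_i$, $S(f_i)=-K_i^{-1}f_i$. $V=R^n$ with basis $v_1,\dots,v_n$: $K_iv_j=q^{\delta_{ij}-\delta_{i+1,j}}v_j$, $e_iv_{i+1}=v_i$, $e_iv_j=0$ for $j\ne i+1$, $f_iv_i=v_{i+1}$,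 $f_iv_j=0$ for $j\neq i$, and $e_i^{(l)},f_i^{(l)}$ act as $0$ for $l\ge2$. $\mathbf U'$ acts on tensor powers via $\Delta$ and on $V^*=\mathrm{Hom}_R(V,R)$ (dual basis $v_1^*,\dots,v_n^*$) by $(xf)(w)=f(S(x)w)$. For a multi-index $\mathbf i=(i_1,\dots,i_m)$, $v_{\mathbf i}=v_{i_1}\otimes\cdots\otimes v_{i_m}$; $\mathfrak S_m$ acts on multi-indices on the right by place permutations ($\mathbf i.s_t$ swaps the entries in positions $t,t+1$); $l(w)$ is the Coxeter length. *)

theory Defs
  imports "HOL-Combinatorics.Permutations"
begin

text \<open>Integer powers of the invertible element q (qi is its inverse).\<close>
definition qpow :: "'a::comm_ring_1 \<Rightarrow> 'a \<Rightarrow> int \<Rightarrow> 'a" where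
  "qpow q qi z = (if 0 \<le> z then q ^ nat z else qi ^ nat (- z))"

text \<open>Exponent of K_i on v_j: K_i v_j = q^(wt i j) v_j.\<close>
definition wt :: "nat \<Rightarrow> nat \<Rightarrow> int" where
  "wt i j = (if j = i then 1 else 0) - (if j = Suc i then 1 else 0)"

definition wtL :: "nat \<Rightarrow> nat list \<Rightarrow> int" where
  "wtL i ks = sum_list (map (wt i) ks)"

text \<open>Generators of U': K_i^z (z integer), e_i^(l), f_i^(l).\<close>
datatype gen = GK nat int | GE nat nat | GF nat nat

definition gens :: "nat \<Rightarrow> gen set" where
  "gens n = {GK i z | i z. 1 \<le> i \<and> i < n} \<union> {GE i l | i l. 1 \<le> i \<and> i < n}
            \<union> {GF i l | i l. 1 \<le> i \<and> i < n}"

text \<open>Matrix coefficients on V: matV q qi g a b = coefficient of v_a in g v_b.\<close>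
fun matV :: "'a::comm_ring_1 \<Rightarrow> 'a \<Rightarrow> gen \<Rightarrow> nat \<Rightarrow> nat \<Rightarrow> 'a" where
  "matV q qi (GK i z) a b = (if a = b then qpow q qi (z * wt i b) else 0)"
| "matV q qi (GE i l) a b = (if l = 0 then (if a = b then 1 else 0)
      else if l = 1 then (if b = Suc i \<and> a = i then 1 else 0) else 0)"
| "matV q qi (GF i l) a b = (if l = 0 then (if a = b then 1 else 0)
      else if l = 1 then (if b = i \<and> a = Suc i then 1 else 0) else 0)"

text \<open>Matrix coefficients on V of the antipode S(g), using
  S(K^z) = K^(-z), S(e^(l)) = (-1)^l q^(l(l-1)) e^(l) K^l,
  S(f^(l)) = (-1)^l q^(-l(l-1)) K^(-l) f^(l)
  (consequences of S(e)=-eK, S(f)=-K^(-1)f and S antimultiplicative).\<close>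
fun matS :: "'a::comm_ring_1 \<Rightarrow> 'a \<Rightarrow> gen \<Rightarrow> nat \<Rightarrow> nat \<Rightarrow> 'a" where
  "matS q qi (GK i z) a b = matV q qi (GK i (- z)) a b"
| "matS q qi (GE i l) a b = (- 1) ^ l * q ^ (l * (l - 1)) * matV q qi (GE i l) a b
      * qpow q qi (int l * wt i b)"
| "matS q qi (GF i l) a b = (- 1) ^ l * qpow q qi (- int (l * (l - 1)))
      * qpow q qi (- (int l * wt i a)) * matV q qi (GF i l) a b"

text \<open>Matrix coefficients on tensor powers V^{\<otimes>m} = V \<otimes> V^{\<otimes>(m-1)}, via the coproduct:
  Delta(K)=K\<otimes>K, Delta(e^(l)) = sum_{a+b=l} q^(ab) e^(a) \<otimes> K^(-a) e^(b),
  Delta(f^(l)) = sum_{a+b=l} q^(ab) K^a f^(b) \<otimes> f^(a); on V^{\<otimes>0} = R the counit.\<close>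
fun matT :: "'a::comm_ring_1 \<Rightarrow> 'a \<Rightarrow> gen \<Rightarrow> nat list \<Rightarrow> nat list \<Rightarrow> 'a" where
  "matT q qi g [] [] = (case g of GK i z \<Rightarrow> 1 | GE i l \<Rightarrow> (if l = 0 then 1 else 0)
                                 | GF i l \<Rightarrow> (if l = 0 then 1 else 0))"
| "matT q qi (GK i z) (k # ks) (j # js) = matV q qi (GK i z) k j * matT q qi (GK i z) ks js"
| "matT q qi (GE i l) (k # ks) (j # js) =
     (\<Sum>a\<le>l. q ^ (a * (l - a)) * matV q qi (GE i a) k j * qpow q qi (- (int a * wtL i ks))
              * matT q qi (GE i (l - a)) ks js)"
| "matT q qi (GF i l) (k # ks) (j # js) =
     (\<Sum>a\<le>l. q ^ (a * (l - a)) * qpow q qi (int a * wt i k) * matV q qi (GF i (l - a)) k j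
              * matT q qi (GF i a) ks js)"
| "matT q qi g (k # ks) [] = 0"
| "matT q qi g [] (j # js) = 0"

text \<open>Multi-indices of length m with entries in {1..n}: the basis of V^{\<otimes>m}.\<close>
definition tup :: "nat \<Rightarrow> nat \<Rightarrow> nat list set" where
  "tup n m = {js. length js = m \<and> set js \<subseteq> {1..n}}"

text \<open>Elements of V^{\<otimes>m} are coefficient functions x (x js = coefficient of v_js),
  elements of V^* are coefficient functions c (c j = coefficient of v_j^*).\<close>
definition actT :: "'a::comm_ring_1 \<Rightarrow> 'a \<Rightarrow> nat \<Rightarrow> nat \<Rightarrow> gen \<Rightarrow> (nat list \<Rightarrow> 'a) \<Rightarrow> nat list \<Rightarrow> 'a" where
  "actT q qi n m g x = (\<lambda>ks. \<Sum>js\<in>tup n m. matT q qi g ks js * x js)"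

text \<open>Action on V^*: (x.phi)(w) = phi(S(x) w), so x v_j^* = sum_k [S(x)]_{j,k} v_k^*.\<close>
definition actD :: "'a::comm_ring_1 \<Rightarrow> 'a \<Rightarrow> nat \<Rightarrow> gen \<Rightarrow> (nat \<Rightarrow> 'a) \<Rightarrow> nat \<Rightarrow> 'a" where
  "actD q qi n g c = (\<lambda>k. \<Sum>j\<in>{1..n}. matS q qi g j k * c j)"

text \<open>Coxeter length of w in S_m (permutations of positions {0..<m}) = number of inversions.\<close>
definition perm_len :: "nat \<Rightarrow> (nat \<Rightarrow> nat) \<Rightarrow> nat" where
  "perm_len m w = card {(a, b). a < b \<and> b < m \<and> w b < w a}"

text \<open>Right place-permutation action on multi-indices: (i.w)_t = i_{w(t)}.\<close>
definition place_perm :: "nat list \<Rightarrow> (nat \<Rightarrow> nat) \<Rightarrow> nat list" where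
  "place_perm is w = map (\<lambda>t. is ! w t) [0..<length is]"

definition omit :: "nat \<Rightarrow> nat \<Rightarrow> nat list" where
  "omit n i = filter (\<lambda>j. j \<noteq> i) [1..<Suc n]"

definition kappa_coef :: "'a::comm_ring_1 \<Rightarrow> nat \<Rightarrow> nat \<Rightarrow> nat list \<Rightarrow> 'a" where
  "kappa_coef q n i ks = (- q) ^ i *
     (\<Sum>w\<in>{w. w permutes {..<n - 1}}. (- q) ^ perm_len (n - 1) w *
        (if ks = place_perm (omit n i) w then 1 else 0))"

definition kappa :: "'a::comm_ring_1 \<Rightarrow> nat \<Rightarrow> (nat \<Rightarrow> 'a) \<Rightarrow> nat list \<Rightarrow> 'a" where
  "kappa q n c = (\<lambda>ks. \<Sum>i\<in>{1..n}. c i * kappa_coef q n i ks)"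

end

theory Submission
  imports Defs
begin

lemma qpow_0[simp]: "qpow q qi 0 = 1" by (simp add: qpow_def)
lemma qpow_1[simp]: "qpow q qi 1 = q" by (simp add: qpow_def)
lemma qpow_m1[simp]: "qpow q qi (-1) = qi" by (simp add: qpow_def)

lemma qpow_succ: assumes "q * qi = 1" shows "qpow q qi (z + 1) = qpow q qi z * q"
proof (cases "0 \<le> z")
  case True then show ?thesis by (simp add: qpow_def nat_add_distrib)
next
  case False
  define k where "k = nat (-z-1)"
  have k: "- z = int (Suc k)" using False by (simp add: k_def)
  hence "nat (- z) = Suc k" "nat (- (z+1)) = k" by auto
  have e1: "qi * q = 1" using assms by (simp add: mult.commute)
  have e2: "\<And>x. q * (qi * x) = x" using assms by (simp add: mult.assoc[symmetric])
  have nk: "nat (-z) = Suc k" using k by (metis nat_int)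
  have a1: "qpow q qi z = qi ^ Suc k" using False nk by (simp add: qpow_def)
  have k2: "-(z+1) = int k" using k by simp
  have nk2: "nat (-(z+1)) = k" by (metis k2 nat_int)
  have kz: "0 \<le> z+1 \<Longrightarrow> k = 0" using k2 by linarith
  have kz2: "0 \<le> z+1 \<Longrightarrow> z+1 = 0" using k2 by linarith
  have a2: "qpow q qi (z+1) = qi ^ k" using nk2 kz kz2 by (cases "0 \<le> z+1") (simp_all add: qpow_def)
  have "qi ^ Suc k * q = qi ^ k * (qi * q)" by (simp add: mult.assoc mult.commute)
  then show ?thesis using a1 a2 e1 by simp
qed

lemma qpow_pred: assumes "q * qi = 1" shows "qpow q qi (z - 1) = qpow q qi z * qi"
proof -
  have "qpow q qi z = qpow q qi (z - 1) * q" using qpow_succ[OF assms, of "z-1"] by simp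
  hence "qpow q qi z * qi = qpow q qi (z - 1) * (q * qi)" by (simp add: mult.assoc)
  thus ?thesis using assms by simp
qed

lemma qpow_add: assumes "q * qi = 1" shows "qpow q qi (a + b) = qpow q qi a * qpow q qi b"
proof (induction b rule: int_induct[where k=0])
  case base then show ?case by simp
next
  case (step1 i) then show ?case using qpow_succ[OF assms, of "a+i"] qpow_succ[OF assms, of i]
    by (simp add: add.assoc[symmetric] mult.assoc)
next
  case (step2 i) then show ?case using qpow_pred[OF assms, of "a+i"] qpow_pred[OF assms, of i]
    by (simp add: diff_add_eq[symmetric] add_diff_eq mult.assoc)
qed

lemma tup_0: "tup n 0 = {[]}" by (auto simp: tup_def)
lemma tup_Suc: "tup n (Suc m) = (\<lambda>(j,js). j#js) ` ({1..n} \<times> tup n m)"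
  by (auto simp: tup_def length_Suc_conv image_iff)
lemma finite_tup[simp]: "finite (tup n m)"
proof -
  have "tup n m \<subseteq> {xs. set xs \<subseteq> {1..n} \<and> length xs = m}" by (auto simp: tup_def)
  thus ?thesis using finite_lists_length_eq[of "{1..n}" m] finite_subset by blast
qed

lemma sum_tup_Suc: "(\<Sum>js\<in>tup n (Suc m). f js) = (\<Sum>j\<in>{1..n}. \<Sum>js\<in>tup n m. f (j#js))"
proof -
  have inj: "inj_on (\<lambda>(j,js). j#js) ({1..n} \<times> tup n m)" by (auto simp: inj_on_def)
  have "(\<Sum>js\<in>tup n (Suc m). f js) = (\<Sum>p\<in>{1..n} \<times> tup n m. f ((\<lambda>(j,js). j#js) p))"
    unfolding tup_Suc by (rule sum.reindex[OF inj, unfolded comp_def])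
  also have "\<dots> = (\<Sum>j\<in>{1..n}. \<Sum>js\<in>tup n m. f (j#js))"
    by (simp add: sum.cartesian_product split_def)
  finally show ?thesis .
qed

lemma matT_E0: "matT q qi (GE i 0) ks js = (if ks = js then 1 else 0)"
  by (induction ks arbitrary: js; case_tac js; simp)
lemma matT_F0: "matT q qi (GF i 0) ks js = (if ks = js then 1 else 0)"
  by (induction ks arbitrary: js; case_tac js; simp)

lemma wtL_cons[simp]: "wtL i (k#ks) = wt i k + wtL i ks" by (simp add: wtL_def)
lemma wtL_nil[simp]: "wtL i [] = 0" by (simp add: wtL_def)

lemma matT_K: assumes "q * qi = 1"
  shows "matT q qi (GK i z) ks js = (if ks = js then qpow q qi (z * wtL i ks) else 0)"
  by (induction ks arbitrary: js; case_tac js; simp add: qpow_add[OF assms, symmetric] distrib_left)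

lemma matT_E1: "matT q qi (GE i 1) (k#ks) (j#js) =
   (if k = j then matT q qi (GE i 1) ks js else 0)
   + (if j = Suc i \<and> k = i \<and> ks = js then qpow q qi (- wtL i ks) else 0)"
  by (auto simp add: atMost_Suc matT_E0)

lemma matT_F1: "matT q qi (GF i 1) (k#ks) (j#js) =
   (if k = j then qpow q qi (wt i k) * matT q qi (GF i 1) ks js else 0)
   + (if j = i \<and> k = Suc i \<and> ks = js then 1 else 0)"
  by (auto simp add: atMost_Suc matT_F0)

fun eop :: "'a::comm_ring_1 \<Rightarrow> 'a \<Rightarrow> nat \<Rightarrow> (nat list \<Rightarrow> 'a) \<Rightarrow> nat list \<Rightarrow> 'a" where
  "eop q qi i x [] = 0"
| "eop q qi i x (k#ks) = eop q qi i (\<lambda>ys. x (k#ys)) ks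
     + (if k = i then qpow q qi (- wtL i ks) * x (Suc i # ks) else 0)"

fun fop :: "'a::comm_ring_1 \<Rightarrow> 'a \<Rightarrow> nat \<Rightarrow> (nat list \<Rightarrow> 'a) \<Rightarrow> nat list \<Rightarrow> 'a" where
  "fop q qi i x [] = 0"
| "fop q qi i x (k#ks) = qpow q qi (wt i k) * fop q qi i (\<lambda>ys. x (k#ys)) ks
     + (if k = Suc i then x (i # ks) else 0)"

lemma tup_cons: "(k#ks) \<in> tup n m \<longleftrightarrow> (\<exists>m'. m = Suc m' \<and> k \<in> {1..n} \<and> ks \<in> tup n m')"
  by (cases m) (auto simp: tup_def)

lemma sum_if_const: "(\<Sum>x\<in>S. if P then f x else 0) = (if P then (\<Sum>x\<in>S. f x) else (0::'a::comm_monoid_add))"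
  by simp
lemma sum_delta1: "finite S \<Longrightarrow> k \<in> S \<Longrightarrow> (\<Sum>j\<in>S. if k = j then g j else (0::'a::comm_monoid_add)) = g k"
  by (simp add: sum.delta)
lemma sum_delta2: "finite S \<Longrightarrow> k \<in> S \<Longrightarrow> (\<Sum>j\<in>S. if j = k then g j else (0::'a::comm_monoid_add)) = g k"
  by (simp add: sum.delta')

lemma eop_sum:
  assumes i: "1 \<le> i" "i < n"
  shows "ks \<in> tup n m \<Longrightarrow> (\<Sum>js\<in>tup n m. matT q qi (GE i 1) ks js * x js) = eop q qi i x ks"
proof (induction ks arbitrary: m x)
  case Nil
  then have "m = 0" by (simp add: tup_def)
  then show ?case by (simp add: tup_0)
next
  case (Cons k ks)
  then obtain m' where m: "m = Suc m'" and k: "k \<in> {1..n}" and ks: "ks \<in> tup n m'"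
    by (auto simp: tup_cons)
  have si: "Suc i \<in> {1..n}" using i by auto
  have "(\<Sum>js\<in>tup n m. matT q qi (GE i 1) (k#ks) js * x js)
      = (\<Sum>j\<in>{1..n}. \<Sum>js\<in>tup n m'. (if k = j then matT q qi (GE i 1) ks js * x (k#js) else 0)
          + (if j = Suc i \<and> k = i then (if js = ks then qpow q qi (- wtL i ks) * x (j#js) else 0) else 0))"
    unfolding m sum_tup_Suc matT_E1 by (intro sum.cong refl) (auto simp: distrib_right)
  also have "\<dots> = (\<Sum>j\<in>{1..n}. \<Sum>js\<in>tup n m'. (if k = j then matT q qi (GE i 1) ks js * x (k#js) else 0))
          + (\<Sum>j\<in>{1..n}. \<Sum>js\<in>tup n m'. (if j = Suc i \<and> k = i then (if js = ks then qpow q qi (- wtL i ks) * x (j#js) else 0) else 0))"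
    by (simp only: sum.distrib)
  also have "(\<Sum>j\<in>{1..n}. \<Sum>js\<in>tup n m'. (if k = j then matT q qi (GE i 1) ks js * x (k#js) else 0))
      = (\<Sum>js\<in>tup n m'. matT q qi (GE i 1) ks js * x (k#js))"
    unfolding sum_if_const using k by (simp only: sum_delta1 finite_atLeastAtMost)
  also have "(\<Sum>j\<in>{1..n}. \<Sum>js\<in>tup n m'. (if j = Suc i \<and> k = i then (if js = ks then qpow q qi (- wtL i ks) * x (j#js) else 0) else 0))
      = (\<Sum>j\<in>{1..n}. (if j = Suc i then (if k = i then qpow q qi (- wtL i ks) * x (j#ks) else 0) else 0))"
    unfolding sum_if_const using ks by (intro sum.cong refl) (auto simp: sum_delta2)
  also have "\<dots> = (if k = i then qpow q qi (- wtL i ks) * x (Suc i#ks) else 0)"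
    using si by (simp only: sum_delta2 finite_atLeastAtMost)
  also have "(\<Sum>js\<in>tup n m'. matT q qi (GE i 1) ks js * x (k#js)) = eop q qi i (\<lambda>ys. x (k#ys)) ks"
    using Cons.IH[OF ks] by simp
  finally show ?case by simp
qed

lemma fop_sum:
  assumes i: "1 \<le> i" "i < n"
  shows "ks \<in> tup n m \<Longrightarrow> (\<Sum>js\<in>tup n m. matT q qi (GF i 1) ks js * x js) = fop q qi i x ks"
proof (induction ks arbitrary: m x)
  case Nil
  then have "m = 0" by (simp add: tup_def)
  then show ?case by (simp add: tup_0)
next
  case (Cons k ks)
  then obtain m' where m: "m = Suc m'" and k: "k \<in> {1..n}" and ks: "ks \<in> tup n m'"
    by (auto simp: tup_cons)
  have si: "i \<in> {1..n}" using i by auto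
  have "(\<Sum>js\<in>tup n m. matT q qi (GF i 1) (k#ks) js * x js)
      = (\<Sum>j\<in>{1..n}. \<Sum>js\<in>tup n m'. (if k = j then qpow q qi (wt i k) * (matT q qi (GF i 1) ks js * x (k#js)) else 0)
          + (if j = i then (if k = Suc i then (if js = ks then x (j#js) else 0) else 0) else 0))"
    unfolding m sum_tup_Suc matT_F1 by (intro sum.cong refl) (auto simp: distrib_right mult.assoc)
  also have "\<dots> = (\<Sum>j\<in>{1..n}. \<Sum>js\<in>tup n m'. (if k = j then qpow q qi (wt i k) * (matT q qi (GF i 1) ks js * x (k#js)) else 0))
          + (\<Sum>j\<in>{1..n}. \<Sum>js\<in>tup n m'. (if j = i then (if k = Suc i then (if js = ks then x (j#js) else 0) else 0) else 0))"
    by (simp only: sum.distrib)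
  also have "(\<Sum>j\<in>{1..n}. \<Sum>js\<in>tup n m'. (if k = j then qpow q qi (wt i k) * (matT q qi (GF i 1) ks js * x (k#js)) else 0))
      = (\<Sum>js\<in>tup n m'. qpow q qi (wt i k) * (matT q qi (GF i 1) ks js * x (k#js)))"
    unfolding sum_if_const using k by (simp only: sum_delta1 finite_atLeastAtMost)
  also have "(\<Sum>j\<in>{1..n}. \<Sum>js\<in>tup n m'. (if j = i then (if k = Suc i then (if js = ks then x (j#js) else 0) else 0) else 0))
      = (\<Sum>j\<in>{1..n}. (if j = i then (if k = Suc i then x (j#ks) else 0) else 0))"
    unfolding sum_if_const using ks by (intro sum.cong refl) (auto simp: sum_delta2)
  also have "\<dots> = (if k = Suc i then x (i#ks) else 0)"
    using si by (simp only: sum_delta2 finite_atLeastAtMost)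
  also have "(\<Sum>js\<in>tup n m'. qpow q qi (wt i k) * (matT q qi (GF i 1) ks js * x (k#js))) = qpow q qi (wt i k) * fop q qi i (\<lambda>ys. x (k#ys)) ks"
    using Cons.IH[OF ks] by (simp add: sum_distrib_left[symmetric])
  finally show ?case by simp
qed

lemma eop_lin: "eop q qi i (\<lambda>ys. a * x ys) ks = a * eop q qi i x ks"
  by (induction ks arbitrary: x) (simp_all add: algebra_simps)
lemma fop_lin: "fop q qi i (\<lambda>ys. a * x ys) ks = a * fop q qi i x ks"
  by (induction ks arbitrary: x) (simp_all add: algebra_simps)

definition invl :: "nat list \<Rightarrow> nat" where
  "invl ks = card {(a,b). a < b \<and> b < length ks \<and> ks!b < ks!a}"
definition H :: "'a::comm_ring_1 \<Rightarrow> nat set \<Rightarrow> nat list \<Rightarrow> 'a" where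
  "H q S ks = (if distinct ks \<and> set ks = S then (- q) ^ invl ks else 0)"
definition cnt :: "nat set \<Rightarrow> nat \<Rightarrow> nat" where
  "cnt S k = card {y\<in>S. y < k}"

lemma invl_cons: "invl (k#ys) = card {b. b < length ys \<and> ys!b < k} + invl ys"
proof -
  let ?A = "{(a,b). a < b \<and> b < length (k#ys) \<and> (k#ys)!b < (k#ys)!a}"
  let ?B1 = "{b. b < length ys \<and> ys!b < k}"
  let ?B2 = "{(a,b). a < b \<and> b < length ys \<and> ys!b < ys!a}"
  have eq: "?A = (\<lambda>b. (0::nat, Suc b)) ` ?B1 \<union> (\<lambda>(a,b). (Suc a, Suc b)) ` ?B2"
  proof (rule set_eqI, rule iffI)
    fix p assume "p \<in> ?A"
    then obtain a b where p: "p = (a,b)" "a < b" "b < Suc (length ys)" "(k#ys)!b < (k#ys)!a" by auto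
    then obtain b' where b: "b = Suc b'" by (cases b) auto
    show "p \<in> (\<lambda>b. (0::nat, Suc b)) ` ?B1 \<union> (\<lambda>(a,b). (Suc a, Suc b)) ` ?B2"
    proof (cases a)
      case 0 then show ?thesis using p b by auto
    next
      case (Suc a') then show ?thesis using p b by (auto simp: image_iff)
    qed
  next
    fix p assume "p \<in> (\<lambda>b. (0::nat, Suc b)) ` ?B1 \<union> (\<lambda>(a,b). (Suc a, Suc b)) ` ?B2"
    then show "p \<in> ?A" by auto
  qed
  have f2: "finite ?B2" by (rule finite_subset[of _ "{..<length ys} \<times> {..<length ys}"]) auto
  have "card ?A = card ((\<lambda>b. (0::nat, Suc b)) ` ?B1) + card ((\<lambda>(a,b). (Suc a, Suc b)) ` ?B2)"
    unfolding eq by (rule card_Un_disjoint) (use f2 in auto)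
  also have "\<dots> = card ?B1 + card ?B2"
    by (subst card_image, simp add: inj_on_def, subst card_image, auto simp: inj_on_def)
  finally show ?thesis unfolding invl_def by simp
qed

lemma card_nth_less: "distinct ys \<Longrightarrow> card {b. b < length ys \<and> ys!b < k} = card {y\<in>set ys. y < k}"
proof -
  assume d: "distinct ys"
  have "{y\<in>set ys. y < k} = (nth ys) ` {b. b < length ys \<and> ys!b < k}"
    by (auto simp: in_set_conv_nth)
  moreover have "inj_on (nth ys) {b. b < length ys \<and> ys!b < k}"
    using d by (auto simp: inj_on_def nth_eq_iff_index_eq)
  ultimately show ?thesis by (simp add: card_image)
qed

lemma H_cons: "H q S (k#ys) = (if k \<in> S then (- q) ^ cnt S k * H q (S - {k}) ys else 0)"
proof (cases "k \<in> S \<and> distinct ys \<and> set ys = S - {k}")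
  case True
  then have "{y\<in>set ys. y < k} = {y\<in>S. y < k}" by auto
  then have "invl (k#ys) = cnt S k + invl ys"
    using True by (simp add: invl_cons card_nth_less cnt_def)
  with True show ?thesis by (auto simp: H_def power_add)
next
  case False
  then show ?thesis by (auto simp: H_def)
qed


lemma sum_wt: "finite T \<Longrightarrow> sum (wt i) T = (if i \<in> T then 1 else 0) - (if Suc i \<in> T then 1 else 0)"
  unfolding wt_def by (simp add: sum_subtractf sum.delta')

lemma wtL_H: "H q T ks \<noteq> 0 \<Longrightarrow> wtL i ks = sum (wt i) T"
  by (auto simp: H_def wtL_def sum_list_distinct_conv_sum_set split: if_splits)

lemma cnt_Suc_in: "finite S \<Longrightarrow> i \<in> S \<Longrightarrow> cnt S (Suc i) = Suc (cnt S i)"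
proof -
  assume "finite S" "i \<in> S"
  then have "{y\<in>S. y < Suc i} = insert i {y\<in>S. y < i}" by auto
  thus ?thesis using \<open>finite S\<close> by (simp add: cnt_def)
qed
lemma cnt_Suc_notin: "i \<notin> S \<Longrightarrow> cnt S (Suc i) = cnt S i"
proof -
  assume "i \<notin> S"
  then have "{y\<in>S. y < Suc i} = {y\<in>S. y < i}" by (auto simp: less_Suc_eq)
  thus ?thesis by (simp add: cnt_def)
qed


lemma cnt_swap: assumes "finite S" "a \<in> S" "b \<notin> S" "a < k \<longleftrightarrow> b < k"
  shows "cnt (insert b (S - {a})) k = cnt S k"
proof (cases "b < k")
  case True
  let ?X = "{y\<in>S. y < k}"
  have e: "{y\<in>insert b (S - {a}). y < k} = insert b (?X - {a})" using True by auto
  have a: "a \<in> ?X" using True assms by auto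
  have f: "finite ?X" using assms by auto
  have nb: "b \<notin> ?X - {a}" using assms by auto
  have "card (insert b (?X - {a})) = Suc (card (?X - {a}))" using f nb by simp
  also have "\<dots> = card ?X" using card_Suc_Diff1[OF f a] .
  finally show ?thesis unfolding cnt_def e .
next
  case False
  then have "{y\<in>insert b (S - {a}). y < k} = {y\<in>S. y < k}" using assms by auto
  then show ?thesis by (simp add: cnt_def)
qed

lemma H_fun_cons: "(\<lambda>ys. H q S (k#ys)) = (\<lambda>ys. (if k \<in> S then (- q) ^ cnt S k else 0) * H q (S - {k}) ys)"
  by (rule ext) (simp add: H_cons)

lemma H_nil: "H q S [] = (if S = {} then 1 else 0)" by (simp add: H_def invl_def)

lemma qi_neg_pow: assumes "q * qi = 1"
  shows "(x::'a::comm_ring_1) + qi * ((- q) ^ Suc c * y) = x - (- q) ^ c * y"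
proof -
  have "qi * ((- q) ^ Suc c * y) = - ((q * qi) * ((- q) ^ c * y))" by (simp add: algebra_simps)
  thus ?thesis using assms by simp
qed

lemma eop_H: assumes qq: "q * qi = 1"
  shows "finite S \<Longrightarrow> eop q qi i (H q S) ks =
    (if Suc i \<in> S \<and> i \<notin> S then H q (insert i (S - {Suc i})) ks else 0)"
proof (induction ks arbitrary: S)
  case Nil
  then show ?case by (simp add: H_nil)
next
  case (Cons k ks)
  have fS: "finite (S - {k})" using Cons.prems by simp
  have e1: "eop q qi i (H q S) (k#ks) = (if k \<in> S then (- q) ^ cnt S k else 0) *
       (if Suc i \<in> S - {k} \<and> i \<notin> S - {k} then H q (insert i (S - {k} - {Suc i})) ks else 0)
     + (if k = i then qpow q qi (- wtL i ks) * (if Suc i \<in> S then (- q) ^ cnt S (Suc i) * H q (S - {Suc i}) ks else 0) else 0)"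
  proof -
    have "eop q qi i (H q S) (k#ks) = eop q qi i (\<lambda>ys. (if k \<in> S then (- q) ^ cnt S k else 0) * H q (S - {k}) ys) ks
      + (if k = i then qpow q qi (- wtL i ks) * H q S (Suc i # ks) else 0)"
      by (simp only: eop.simps H_fun_cons)
    also have "\<dots> = (if k \<in> S then (- q) ^ cnt S k else 0) * eop q qi i (H q (S - {k})) ks
      + (if k = i then qpow q qi (- wtL i ks) * H q S (Suc i # ks) else 0)"
      by (simp only: eop_lin)
    finally show ?thesis by (simp only: Cons.IH[OF fS] H_cons)
  qed
  let ?S' = "insert i (S - {Suc i})"
  have goal: "H q ?S' (k#ks) = (if k \<in> ?S' then (- q) ^ cnt ?S' k * H q (?S' - {k}) ks else 0)"
    by (rule H_cons)
  show ?case
  proof (cases "k = i")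
    case True
    show ?thesis
    proof (cases "i \<in> S")
      case iS: True
      show ?thesis
      proof (cases "Suc i \<in> S")
        case True
        have s1: "insert i (S - {i} - {Suc i}) = S - {Suc i}" using iS by auto
        have "(- q) ^ cnt S i * H q (S - {Suc i}) ks + qpow q qi (- wtL i ks) * ((- q) ^ cnt S (Suc i) * H q (S - {Suc i}) ks) = 0"
        proof (cases "H q (S - {Suc i}) ks = 0")
          case False
          have "wtL i ks = 1" using wtL_H[OF False] Cons.prems iS by (simp add: sum_wt)
          then show ?thesis using qi_neg_pow[OF qq] cnt_Suc_in[OF Cons.prems iS] by simp
        qed simp
        then show ?thesis using e1 \<open>k = i\<close> iS True s1 by simp
      next
        case False
        then show ?thesis using e1 \<open>k = i\<close> iS by simp
      qed
    next
      case niS: False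
      show ?thesis
      proof (cases "Suc i \<in> S")
        case True
        have s1: "?S' - {i} = S - {Suc i}" using niS by auto
        have c1: "cnt ?S' i = cnt S i" unfolding cnt_def by (rule arg_cong[where f=card]) auto
        have "qpow q qi (- wtL i ks) * H q (S - {Suc i}) ks = H q (S - {Suc i}) ks"
        proof (cases "H q (S - {Suc i}) ks = 0")
          case False
          have "wtL i ks = 0" using wtL_H[OF False] Cons.prems niS by (simp add: sum_wt)
          then show ?thesis by simp
        qed simp
        then show ?thesis using e1 goal \<open>k = i\<close> niS True s1 c1 cnt_Suc_notin[OF niS]
          by (simp add: mult.left_commute)
      next
        case False
        then show ?thesis using e1 \<open>k = i\<close> niS by simp
      qed
    qed
  next
    case kni: False
    show ?thesis
    proof (cases "k = Suc i")
      case True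
      then show ?thesis using e1 kni goal by auto
    next
      case False
      show ?thesis
      proof (cases "Suc i \<in> S \<and> i \<notin> S \<and> k \<in> S")
        case True
        have c1: "cnt ?S' k = cnt S k" proof -
          have "(Suc i < k) = (i < k)" using kni False by auto
          then show ?thesis using cnt_swap[OF Cons.prems, of "Suc i" i k] True by blast
        qed
        have s1: "insert i (S - {k} - {Suc i}) = ?S' - {k}" using kni by auto
        show ?thesis using e1 goal True kni False c1 s1 by auto
      next
        case nc: False
        then show ?thesis using e1 goal kni False by auto
      qed
    qed
  qed
qed

lemma fop_H: assumes qq: "q * qi = 1"
  shows "finite S \<Longrightarrow> fop q qi i (H q S) ks =
    (if i \<in> S \<and> Suc i \<notin> S then H q (insert (Suc i) (S - {i})) ks else 0)"
proof (induction ks arbitrary: S)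
  case Nil
  then show ?case by (simp add: H_nil)
next
  case (Cons k ks)
  have fS: "finite (S - {k})" using Cons.prems by simp
  have e1: "fop q qi i (H q S) (k#ks) = qpow q qi (wt i k) * ((if k \<in> S then (- q) ^ cnt S k else 0) *
       (if i \<in> S - {k} \<and> Suc i \<notin> S - {k} then H q (insert (Suc i) (S - {k} - {i})) ks else 0))
     + (if k = Suc i then (if i \<in> S then (- q) ^ cnt S i * H q (S - {i}) ks else 0) else 0)"
  proof -
    have "fop q qi i (H q S) (k#ks) = qpow q qi (wt i k) * fop q qi i (\<lambda>ys. (if k \<in> S then (- q) ^ cnt S k else 0) * H q (S - {k}) ys) ks
      + (if k = Suc i then H q S (i # ks) else 0)"
      by (simp only: fop.simps H_fun_cons)
    also have "\<dots> = qpow q qi (wt i k) * ((if k \<in> S then (- q) ^ cnt S k else 0) * fop q qi i (H q (S - {k})) ks)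
      + (if k = Suc i then H q S (i # ks) else 0)"
      by (simp only: fop_lin)
    finally show ?thesis by (simp only: Cons.IH[OF fS] H_cons)
  qed
  let ?S' = "insert (Suc i) (S - {i})"
  have goal: "H q ?S' (k#ks) = (if k \<in> ?S' then (- q) ^ cnt ?S' k * H q (?S' - {k}) ks else 0)"
    by (rule H_cons)
  show ?case
  proof (cases "k = Suc i")
    case True
    have wk: "wt i k = -1" using True by (simp add: wt_def)
    show ?thesis
    proof (cases "i \<in> S")
      case iS: True
      show ?thesis
      proof (cases "Suc i \<in> S")
        case True
        have s1: "insert (Suc i) (S - {Suc i} - {i}) = S - {i}" using True by auto
        have "qi * ((- q) ^ cnt S (Suc i) * H q (S - {i}) ks) + (- q) ^ cnt S i * H q (S - {i}) ks = 0"
          using qi_neg_pow[OF qq, of "(- q) ^ cnt S i * H q (S - {i}) ks"] cnt_Suc_in[OF Cons.prems iS]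
          by (simp add: add.commute)
        then show ?thesis using e1 \<open>k = Suc i\<close> iS True s1 wk by simp
      next
        case nS: False
        have s1: "?S' - {Suc i} = S - {i}" using nS by auto
        have c1: "cnt ?S' (Suc i) = cnt S i" unfolding cnt_def by (rule arg_cong[where f=card]) (auto simp: less_Suc_eq)
        show ?thesis using e1 goal \<open>k = Suc i\<close> iS nS s1 c1 wk by simp
      qed
    next
      case niS: False
      then show ?thesis using e1 \<open>k = Suc i\<close> by simp
    qed
  next
    case kni: False
    show ?thesis
    proof (cases "k = i")
      case True
      then show ?thesis using e1 kni goal by auto
    next
      case False
      have wk: "wt i k = 0" using False kni by (simp add: wt_def)
      show ?thesis
      proof (cases "i \<in> S \<and> Suc i \<notin> S \<and> k \<in> S")
        case True
        have c1: "cnt ?S' k = cnt S k" proof -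
          have "(i < k) = (Suc i < k)" using kni False by auto
          then show ?thesis using cnt_swap[OF Cons.prems, of i "Suc i" k] True by blast
        qed
        have s1: "insert (Suc i) (S - {k} - {i}) = ?S' - {k}" using kni by auto
        show ?thesis using e1 goal True kni False c1 s1 wk by auto
      next
        case nc: False
        then show ?thesis using e1 goal kni False wk by auto
      qed
    qed
  qed
qed

lemma sorted_less_iff: "sorted_wrt (<) xs \<Longrightarrow> a < length xs \<Longrightarrow> b < length xs \<Longrightarrow>
    ((xs!a::nat) < xs!b \<longleftrightarrow> a < b)"
  unfolding sorted_wrt_iff_nth_less
  by (metis linorder_neqE_nat order_less_asym order_less_irrefl)

lemma pp_props: assumes w: "w permutes {..<m}" and len: "length om = m" and d: "distinct om"
  shows "distinct (place_perm om w)" "set (place_perm om w) = set om"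
proof -
  have wi: "\<And>t. t < m \<Longrightarrow> w t < m" using permutes_in_image[OF w] by auto
  have "inj_on (\<lambda>t. om ! w t) {0..<m}"
  proof (rule inj_onI)
    fix a b assume a: "a \<in> {0..<m}" and b: "b \<in> {0..<m}" and e: "om ! w a = om ! w b"
    then have "w a = w b" using d wi len by (simp add: nth_eq_iff_index_eq)
    then show "a = b" using permutes_inj[OF w] by (simp add: inj_eq)
  qed
  then show "distinct (place_perm om w)" unfolding place_perm_def len by (simp add: distinct_map)
  have "set (place_perm om w) = (nth om) ` (w ` {..<m})" unfolding place_perm_def len by auto
  also have "\<dots> = (nth om) ` {..<m}" using permutes_image[OF w] by simp
  also have "\<dots> = set om" using len by (auto simp: in_set_conv_nth)
  finally show "set (place_perm om w) = set om" .
qed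

lemma perm_sum_H:
  fixes q :: "'a::comm_ring_1"
  assumes sw: "sorted_wrt (<) om" and len: "length om = m"
  shows "(\<Sum>w\<in>{w. w permutes {..<m}}. (- q) ^ perm_len m w * (if ks = place_perm om w then 1 else 0))
         = H q (set om) ks"
proof -
  have d: "distinct om" using sw by (simp add: strict_sorted_iff)
  let ?P = "{w. w permutes {..<m}}"
  have fP: "finite ?P" by (rule finite_permutations) simp
  have "(\<Sum>w\<in>?P. (- q) ^ perm_len m w * (if ks = place_perm om w then 1 else 0))
      = (\<Sum>w\<in>?P \<inter> {w. ks = place_perm om w}. (- q) ^ perm_len m w)"
    unfolding sum.inter_restrict[OF fP] by (intro sum.cong refl) simp
  also have "\<dots> = H q (set om) ks"
  proof (cases "distinct ks \<and> set ks = set om")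
    case False
    have "?P \<inter> {w. ks = place_perm om w} = {}" using False pp_props[OF _ len d] by auto
    then show ?thesis using False by (auto simp: H_def)
  next
    case True
    have lk: "length ks = m" using True d len by (metis distinct_card)
    have inj: "inj_on (nth om) {..<m}" using d len by (simp add: inj_on_nth)
    have im: "(nth om) ` {..<m} = set om" using len by (auto simp: in_set_conv_nth)
    define w0 where "w0 t = (if t < m then the_inv_into {..<m} (nth om) (ks!t) else t)" for t
    have ksin: "\<And>t. t < m \<Longrightarrow> ks!t \<in> (nth om) ` {..<m}" using True lk im by auto
    have w0in: "\<And>t. t < m \<Longrightarrow> w0 t < m"
      using the_inv_into_into[OF inj ksin] unfolding w0_def by auto
    have w0nth: "\<And>t. t < m \<Longrightarrow> om ! (w0 t) = ks ! t"
      using f_the_inv_into_f[OF inj ksin] unfolding w0_def by auto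
    have w0inj: "inj_on w0 {..<m}"
    proof (rule inj_onI)
      fix a b assume "a \<in> {..<m}" "b \<in> {..<m}" "w0 a = w0 b"
      then have "ks ! a = ks ! b" using w0nth by (metis lessThan_iff)
      then show "a = b" using True lk \<open>a \<in> {..<m}\<close> \<open>b \<in> {..<m}\<close> by (simp add: nth_eq_iff_index_eq)
    qed
    have w0P: "w0 permutes {..<m}"
    proof (rule bij_imp_permutes)
      have "w0 ` {..<m} = {..<m}" by (rule endo_inj_surj) (use w0in w0inj in auto)
      then show "bij_betw w0 {..<m} {..<m}" using w0inj by (simp add: bij_betw_def)
      show "\<And>x. x \<notin> {..<m} \<Longrightarrow> w0 x = x" by (simp add: w0_def)
    qed
    have ppw0: "ks = place_perm om w0"
      unfolding place_perm_def len by (rule nth_equalityI) (auto simp: lk w0nth)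
    have uniq: "\<And>w. w \<in> ?P \<Longrightarrow> ks = place_perm om w \<Longrightarrow> w = w0"
    proof
      fix w t assume wP: "w \<in> ?P" and e: "ks = place_perm om w"
      have w: "w permutes {..<m}" using wP by simp
      show "w t = w0 t"
      proof (cases "t < m")
        case True
        have wt: "w t < m" using permutes_in_image[OF w] True by auto
        have "ks ! t = om ! w t" using e True len by (simp add: place_perm_def)
        then have "om ! w t = om ! w0 t" using w0nth True by simp
        then show ?thesis using wt w0in True d len by (simp add: nth_eq_iff_index_eq)
      next
        case False
        then show ?thesis using permutes_not_in[OF w] by (simp add: w0_def)
      qed
    qed
    have "?P \<inter> {w. ks = place_perm om w} = {w0}" using uniq w0P ppw0 by auto
    moreover have "perm_len m w0 = invl ks"
    proof -
      have "\<And>a b. a < b \<Longrightarrow> b < m \<Longrightarrow> (w0 b < w0 a \<longleftrightarrow> ks!b < ks!a)"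
      proof -
        fix a b assume ab: "a < b" "b < m"
        have "(om ! w0 b < om ! w0 a) = (w0 b < w0 a)"
          using sorted_less_iff[OF sw, of "w0 b" "w0 a"] w0in[of a] w0in[of b] ab len by simp
        then show "(w0 b < w0 a \<longleftrightarrow> ks!b < ks!a)" using w0nth[of a] w0nth[of b] ab by simp
      qed
      then have "{(a, b). a < b \<and> b < m \<and> w0 b < w0 a} = {(a,b). a < b \<and> b < length ks \<and> ks!b < ks!a}"
        using lk by auto
      then show ?thesis unfolding perm_len_def invl_def by simp
    qed
    ultimately show ?thesis using True by (simp add: H_def)
  qed
  finally show ?thesis .
qed

lemma omit_props: assumes "j \<in> {1..n}"
  shows "sorted_wrt (<) (omit n j)" "set (omit n j) = {1..n} - {j}" "length (omit n j) = n - 1"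
proof -
  show s: "sorted_wrt (<) (omit n j)" unfolding omit_def by (rule sorted_wrt_filter[OF sorted_wrt_upt])
  show st: "set (omit n j) = {1..n} - {j}" unfolding omit_def by auto
  have "distinct (omit n j)" unfolding omit_def by simp
  then have "length (omit n j) = card ({1..n} - {j})" using st by (metis distinct_card)
  then show "length (omit n j) = n - 1" using assms by simp
qed

lemma kc_H: assumes "j \<in> {1..n}"
  shows "kappa_coef q n j ks = (- q) ^ j * H q ({1..n} - {j}) ks"
  unfolding kappa_coef_def using perm_sum_H[OF omit_props(1,3)[OF assms], of q ks] omit_props(2)[OF assms]
  by simp

lemma count_E: "matT q qi (GE i l) ks js \<noteq> 0 \<Longrightarrow> l \<le> count_list js (Suc i)"
proof (induction ks arbitrary: js l)
  case Nil
  then show ?case by (cases js) (auto split: if_splits)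
next
  case (Cons k ks)
  then obtain j js' where js: "js = j # js'" by (cases js) auto
  from Cons.prems obtain a where a: "a \<le> l" and
    t: "q ^ (a * (l - a)) * matV q qi (GE i a) k j * qpow q qi (- (int a * wtL i ks))
              * matT q qi (GE i (l - a)) ks js' \<noteq> 0"
    unfolding js by (auto dest: sum.not_neutral_contains_not_neutral)
  from t have m1: "matV q qi (GE i a) k j \<noteq> 0" and m2: "matT q qi (GE i (l - a)) ks js' \<noteq> 0"
    by (metis mult_zero_left mult_zero_right)+
  from m1 have "a = 0 \<or> (a = 1 \<and> j = Suc i)" by (auto split: if_splits)
  with Cons.IH[OF m2] a show ?case unfolding js by auto
qed

lemma count_F: "matT q qi (GF i l) ks js \<noteq> 0 \<Longrightarrow> l \<le> count_list js i"
proof (induction ks arbitrary: js l)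
  case Nil
  then show ?case by (cases js) (auto split: if_splits)
next
  case (Cons k ks)
  then obtain j js' where js: "js = j # js'" by (cases js) auto
  from Cons.prems obtain a where a: "a \<le> l" and
    t: "q ^ (a * (l - a)) * qpow q qi (int a * wt i k) * matV q qi (GF i (l - a)) k j
              * matT q qi (GF i a) ks js' \<noteq> 0"
    unfolding js by (auto dest: sum.not_neutral_contains_not_neutral)
  from t have m1: "matV q qi (GF i (l - a)) k j \<noteq> 0" and m2: "matT q qi (GF i a) ks js' \<noteq> 0"
    by (metis mult_zero_left mult_zero_right)+
  from m1 have "l - a = 0 \<or> (l - a = 1 \<and> j = i)" by (auto split: if_splits)
  with Cons.IH[OF m2] a show ?case unfolding js by auto
qed

lemma count_distinct: "distinct xs \<Longrightarrow> count_list xs x \<le> 1"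
  by (induction xs) (auto simp: count_list_0_iff)

lemma kc_fun: "j \<in> {1..n} \<Longrightarrow> kappa_coef q n j = (\<lambda>ys. (- q) ^ j * H q ({1..n} - {j}) ys)"
  by (rule ext) (rule kc_H)

lemma K_case: assumes qq: "q * qi = 1" and i: "1 \<le> i" "i < n" and j: "j \<in> {1..n}"
  and ks: "ks \<in> tup n (n - 1)"
  shows "(\<Sum>k\<in>{1..n}. matS q qi (GK i z) j k * kappa_coef q n k ks)
       = (\<Sum>js\<in>tup n (n - 1). matT q qi (GK i z) ks js * kappa_coef q n j js)"
proof -
  have "(\<Sum>k\<in>{1..n}. matS q qi (GK i z) j k * kappa_coef q n k ks)
     = (\<Sum>k\<in>{1..n}. if j = k then qpow q qi (- z * wt i k) * kappa_coef q n k ks else 0)"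
    by (intro sum.cong refl) simp
  also have "\<dots> = qpow q qi (- z * wt i j) * kappa_coef q n j ks" using j by (simp only: sum_delta1 finite_atLeastAtMost)
  finally have L: "(\<Sum>k\<in>{1..n}. matS q qi (GK i z) j k * kappa_coef q n k ks) = qpow q qi (- z * wt i j) * kappa_coef q n j ks" .
  have "(\<Sum>js\<in>tup n (n - 1). matT q qi (GK i z) ks js * kappa_coef q n j js)
     = (\<Sum>js\<in>tup n (n - 1). if ks = js then qpow q qi (z * wtL i ks) * kappa_coef q n j js else 0)"
    by (intro sum.cong refl) (simp add: matT_K[OF qq])
  also have "\<dots> = qpow q qi (z * wtL i ks) * kappa_coef q n j ks" using ks by (simp only: sum_delta1 finite_tup)
  finally have R: "(\<Sum>js\<in>tup n (n - 1). matT q qi (GK i z) ks js * kappa_coef q n j js) = qpow q qi (z * wtL i ks) * kappa_coef q n j ks" .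
  show ?thesis
  proof (cases "H q ({1..n} - {j}) ks = 0")
    case True
    then show ?thesis using L R kc_H[OF j, of q ks] by simp
  next
    case False
    have "wtL i ks = sum (wt i) ({1..n} - {j})" by (rule wtL_H[OF False])
    also have "\<dots> = (if i \<in> {1..n} - {j} then 1 else 0) - (if Suc i \<in> {1..n} - {j} then 1 else 0)"
      by (simp only: sum_wt finite_Diff finite_atLeastAtMost)
    also have "\<dots> = - wt i j" using i j by (auto simp: wt_def)
    finally show ?thesis using L R by simp
  qed
qed

lemma E_case: assumes qq: "q * qi = 1" and i: "1 \<le> i" "i < n" and j: "j \<in> {1..n}"
  and ks: "ks \<in> tup n (n - 1)"
  shows "(\<Sum>k\<in>{1..n}. matS q qi (GE i l) j k * kappa_coef q n k ks)
       = (\<Sum>js\<in>tup n (n - 1). matT q qi (GE i l) ks js * kappa_coef q n j js)"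
proof (cases "l = 0")
  case True
  have "(\<Sum>k\<in>{1..n}. matS q qi (GE i l) j k * kappa_coef q n k ks)
     = (\<Sum>k\<in>{1..n}. if j = k then kappa_coef q n k ks else 0)"
    using True by (intro sum.cong refl) simp
  also have "\<dots> = kappa_coef q n j ks" using j by (simp only: sum_delta1 finite_atLeastAtMost)
  also have "\<dots> = (\<Sum>js\<in>tup n (n - 1). if ks = js then kappa_coef q n j js else 0)"
    using ks by (simp only: sum_delta1 finite_tup)
  also have "\<dots> = (\<Sum>js\<in>tup n (n - 1). matT q qi (GE i l) ks js * kappa_coef q n j js)"
    using True by (intro sum.cong refl) (simp add: matT_E0)
  finally show ?thesis .
next
  case l0: False
  show ?thesis
  proof (cases "l = 1")
    case True
    have si: "Suc i \<in> {1..n}" using i by auto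
    have "(\<Sum>k\<in>{1..n}. matS q qi (GE i l) j k * kappa_coef q n k ks)
       = (\<Sum>k\<in>{1..n}. if k = Suc i then (if j = i then - qi * kappa_coef q n k ks else 0) else 0)"
      using True by (intro sum.cong refl) (simp add: wt_def)
    also have "\<dots> = (if j = i then - qi * kappa_coef q n (Suc i) ks else 0)"
      using si by (simp only: sum_delta2 finite_atLeastAtMost)
    finally have L: "(\<Sum>k\<in>{1..n}. matS q qi (GE i l) j k * kappa_coef q n k ks) = (if j = i then - qi * kappa_coef q n (Suc i) ks else 0)" .
    have "(\<Sum>js\<in>tup n (n - 1). matT q qi (GE i l) ks js * kappa_coef q n j js)
       = eop q qi i (kappa_coef q n j) ks" unfolding True by (rule eop_sum[OF i ks])
    also have "\<dots> = (- q) ^ j * eop q qi i (H q ({1..n} - {j})) ks" by (simp only: kc_fun[OF j] eop_lin)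
    also have "\<dots> = (- q) ^ j * (if Suc i \<in> {1..n} - {j} \<and> i \<notin> {1..n} - {j}
        then H q (insert i ({1..n} - {j} - {Suc i})) ks else 0)" by (simp only: eop_H[OF qq] finite_Diff finite_atLeastAtMost)
    finally have R: "(\<Sum>js\<in>tup n (n - 1). matT q qi (GE i l) ks js * kappa_coef q n j js) = (- q) ^ j * (if Suc i \<in> {1..n} - {j} \<and> i \<notin> {1..n} - {j}
        then H q (insert i ({1..n} - {j} - {Suc i})) ks else 0)" .
    show ?thesis
    proof (cases "j = i")
      case True
      have s: "insert i ({1..n} - {j} - {Suc i}) = {1..n} - {Suc i}" using True i by auto
      have "- qi * ((- q) ^ Suc i * H q ({1..n} - {Suc i}) ks) = (q * qi) * ((- q) ^ i * H q ({1..n} - {Suc i}) ks)"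
        by (simp add: algebra_simps)
      then show ?thesis using L R True s kc_H[OF si, of q ks] i qq by simp
    next
      case False
      then show ?thesis using L R i by auto
    qed
  next
    case l1: False
    have "(\<Sum>k\<in>{1..n}. matS q qi (GE i l) j k * kappa_coef q n k ks) = 0"
      using l0 l1 by (intro sum.neutral) simp
    moreover have "(\<Sum>js\<in>tup n (n - 1). matT q qi (GE i l) ks js * kappa_coef q n j js) = 0"
    proof (intro sum.neutral ballI)
      fix js assume "js \<in> tup n (n - 1)"
      show "matT q qi (GE i l) ks js * kappa_coef q n j js = 0"
      proof (cases "H q ({1..n} - {j}) js = 0")
        case True then show ?thesis using kc_H[OF j, of q js] by simp
      next
        case False
        then have "distinct js" by (auto simp: H_def split: if_splits)
        then have "count_list js (Suc i) \<le> 1" by (rule count_distinct)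
        then have "matT q qi (GE i l) ks js = 0" using count_E[of q qi i l ks js] l0 l1 by fastforce
        then show ?thesis by simp
      qed
    qed
    ultimately show ?thesis by simp
  qed
qed

lemma F_case: assumes qq: "q * qi = 1" and i: "1 \<le> i" "i < n" and j: "j \<in> {1..n}"
  and ks: "ks \<in> tup n (n - 1)"
  shows "(\<Sum>k\<in>{1..n}. matS q qi (GF i l) j k * kappa_coef q n k ks)
       = (\<Sum>js\<in>tup n (n - 1). matT q qi (GF i l) ks js * kappa_coef q n j js)"
proof (cases "l = 0")
  case True
  have "(\<Sum>k\<in>{1..n}. matS q qi (GF i l) j k * kappa_coef q n k ks)
     = (\<Sum>k\<in>{1..n}. if j = k then kappa_coef q n k ks else 0)"
    using True by (intro sum.cong refl) simp
  also have "\<dots> = kappa_coef q n j ks" using j by (simp only: sum_delta1 finite_atLeastAtMost)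
  also have "\<dots> = (\<Sum>js\<in>tup n (n - 1). if ks = js then kappa_coef q n j js else 0)"
    using ks by (simp only: sum_delta1 finite_tup)
  also have "\<dots> = (\<Sum>js\<in>tup n (n - 1). matT q qi (GF i l) ks js * kappa_coef q n j js)"
    using True by (intro sum.cong refl) (simp add: matT_F0)
  finally show ?thesis .
next
  case l0: False
  show ?thesis
  proof (cases "l = 1")
    case True
    have si: "i \<in> {1..n}" using i by auto
    have "(\<Sum>k\<in>{1..n}. matS q qi (GF i l) j k * kappa_coef q n k ks)
       = (\<Sum>k\<in>{1..n}. if k = i then (if j = Suc i then - q * kappa_coef q n k ks else 0) else 0)"
      using True by (intro sum.cong refl) (simp add: wt_def)
    also have "\<dots> = (if j = Suc i then - q * kappa_coef q n i ks else 0)"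
      using si by (simp only: sum_delta2 finite_atLeastAtMost)
    finally have L: "(\<Sum>k\<in>{1..n}. matS q qi (GF i l) j k * kappa_coef q n k ks) = (if j = Suc i then - q * kappa_coef q n i ks else 0)" .
    have "(\<Sum>js\<in>tup n (n - 1). matT q qi (GF i l) ks js * kappa_coef q n j js)
       = fop q qi i (kappa_coef q n j) ks" unfolding True by (rule fop_sum[OF i ks])
    also have "\<dots> = (- q) ^ j * fop q qi i (H q ({1..n} - {j})) ks" by (simp only: kc_fun[OF j] fop_lin)
    also have "\<dots> = (- q) ^ j * (if i \<in> {1..n} - {j} \<and> Suc i \<notin> {1..n} - {j}
        then H q (insert (Suc i) ({1..n} - {j} - {i})) ks else 0)" by (simp only: fop_H[OF qq] finite_Diff finite_atLeastAtMost)
    finally have R: "(\<Sum>js\<in>tup n (n - 1). matT q qi (GF i l) ks js * kappa_coef q n j js) = (- q) ^ j * (if i \<in> {1..n} - {j} \<and> Suc i \<notin> {1..n} - {j}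
        then H q (insert (Suc i) ({1..n} - {j} - {i})) ks else 0)" .
    show ?thesis
    proof (cases "j = Suc i")
      case True
      have s: "insert (Suc i) ({1..n} - {j} - {i}) = {1..n} - {i}" using True i by auto
      then show ?thesis using L R True s kc_H[OF si, of q ks] i by simp
    next
      case False
      then show ?thesis using L R i j by auto
    qed
  next
    case l1: False
    have "(\<Sum>k\<in>{1..n}. matS q qi (GF i l) j k * kappa_coef q n k ks) = 0"
      using l0 l1 by (intro sum.neutral) simp
    moreover have "(\<Sum>js\<in>tup n (n - 1). matT q qi (GF i l) ks js * kappa_coef q n j js) = 0"
    proof (intro sum.neutral ballI)
      fix js assume "js \<in> tup n (n - 1)"
      show "matT q qi (GF i l) ks js * kappa_coef q n j js = 0"
      proof (cases "H q ({1..n} - {j}) js = 0")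
        case True then show ?thesis using kc_H[OF j, of q js] by simp
      next
        case False
        then have "distinct js" by (auto simp: H_def split: if_splits)
        then have "count_list js i \<le> 1" by (rule count_distinct)
        then have "matT q qi (GF i l) ks js = 0" using count_F[of q qi i l ks js] l0 l1 by fastforce
        then show ?thesis by simp
      qed
    qed
    ultimately show ?thesis by simp
  qed
qed

lemma gen_case: assumes qq: "q * qi = 1" and g: "g \<in> gens n" and j: "j \<in> {1..n}"
  and ks: "ks \<in> tup n (n - 1)"
  shows "(\<Sum>k\<in>{1..n}. matS q qi g j k * kappa_coef q n k ks)
       = (\<Sum>js\<in>tup n (n - 1). matT q qi g ks js * kappa_coef q n j js)"
proof -
  have "(\<exists>i z. g = GK i z \<and> 1 \<le> i \<and> i < n) \<or> (\<exists>i l. g = GE i l \<and> 1 \<le> i \<and> i < n)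
     \<or> (\<exists>i l. g = GF i l \<and> 1 \<le> i \<and> i < n)" using g unfolding gens_def by blast
  then show ?thesis
  proof (elim disjE exE conjE)
    fix i z assume "g = GK i z" "1 \<le> i" "i < n"
    then show ?thesis using K_case[OF qq _ _ j ks] by simp
  next
    fix i l assume "g = GE i l" "1 \<le> i" "i < n"
    then show ?thesis using E_case[OF qq _ _ j ks] by simp
  next
    fix i l assume "g = GF i l" "1 \<le> i" "i < n"
    then show ?thesis using F_case[OF qq _ _ j ks] by simp
  qed
qed

lemma kappa_omit: assumes i: "i \<in> {1..n}"
  shows "kappa q n c (omit n i) = c i * (- q) ^ i"
proof -
  have sw: "sorted_wrt (<) (omit n i)" and st: "set (omit n i) = {1..n} - {i}"
    using omit_props[OF i] by auto
  have d: "distinct (omit n i)" using sw by (simp add: strict_sorted_iff)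
  have inv0: "invl (omit n i) = 0"
  proof -
    have e: "{(a,b). a < b \<and> b < length (omit n i) \<and> omit n i ! b < omit n i ! a} = {}"
    proof (rule equals0I)
      fix p assume "p \<in> {(a,b). a < b \<and> b < length (omit n i) \<and> omit n i ! b < omit n i ! a}"
      then obtain a b where "a < b" "b < length (omit n i)" "omit n i ! b < omit n i ! a" by auto
      then show False using sorted_less_iff[OF sw, of b a] by simp
    qed
    show ?thesis unfolding invl_def e by simp
  qed
  have h: "kappa_coef q n j (omit n i) = (if j = i then (- q) ^ i else 0)" if j: "j \<in> {1..n}" for j
  proof (cases "j = i")
    case True
    then show ?thesis using kc_H[OF j, of q "omit n i"] d st inv0 by (simp add: H_def)
  next
    case False
    have a1: "i \<notin> set (omit n i)" using st by simp
    have a2: "i \<in> {1..n} - {j}" using i False by simp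
    have "set (omit n i) \<noteq> {1..n} - {j}" using a1 a2 by blast
    then show ?thesis using kc_H[OF j, of q "omit n i"] False by (simp add: H_def)
  qed
  have "kappa q n c (omit n i) = (\<Sum>j\<in>{1..n}. if j = i then c j * (- q) ^ i else 0)"
    unfolding kappa_def by (rule sum.cong[OF refl]) (simp add: h)
  also have "\<dots> = c i * (- q) ^ i" using i by (simp only: sum_delta2 finite_atLeastAtMost)
  finally show ?thesis .
qed

theorem lemma2p2:
  fixes q qi :: "'a::comm_ring_1" and n :: nat
  assumes "q * qi = 1" and "1 \<le> n"
  shows "(\<forall>g\<in>gens n. \<forall>c. \<forall>ks\<in>tup n (n - 1).
            kappa q n (actD q qi n g c) ks = actT q qi n (n - 1) g (kappa q n c) ks)
       \<and> (\<forall>c c'. (\<forall>ks\<in>tup n (n - 1). kappa q n c ks = kappa q n c' ks)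
                  \<longrightarrow> (\<forall>i\<in>{1..n}. c i = c' i))"
proof (intro conjI ballI allI impI)
  fix g c ks assume g: "g \<in> gens n" and ks: "ks \<in> tup n (n - 1)"
  have "kappa q n (actD q qi n g c) ks
      = (\<Sum>k\<in>{1..n}. \<Sum>j\<in>{1..n}. c j * (matS q qi g j k * kappa_coef q n k ks))"
    unfolding kappa_def actD_def sum_distrib_right by (simp only: mult.assoc mult.commute[of "c _"])
  also have "\<dots> = (\<Sum>j\<in>{1..n}. c j * (\<Sum>k\<in>{1..n}. matS q qi g j k * kappa_coef q n k ks))"
    by (simp only: sum_distrib_left) (rule sum.swap)
  also have "\<dots> = (\<Sum>j\<in>{1..n}. c j * (\<Sum>js\<in>tup n (n - 1). matT q qi g ks js * kappa_coef q n j js))"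
  proof (rule sum.cong[OF refl])
    fix j assume "j \<in> {1..n}"
    then show "c j * (\<Sum>k\<in>{1..n}. matS q qi g j k * kappa_coef q n k ks) =
       c j * (\<Sum>js\<in>tup n (n - 1). matT q qi g ks js * kappa_coef q n j js)"
      using gen_case[OF assms(1) g _ ks] by simp
  qed
  also have "\<dots> = (\<Sum>js\<in>tup n (n - 1). matT q qi g ks js * (\<Sum>j\<in>{1..n}. c j * kappa_coef q n j js))"
    by (simp only: sum_distrib_left mult.left_commute[of "c _"]) (rule sum.swap)
  also have "\<dots> = actT q qi n (n - 1) g (kappa q n c) ks"
    unfolding actT_def kappa_def by simp
  finally show "kappa q n (actD q qi n g c) ks = actT q qi n (n - 1) g (kappa q n c) ks" .
next
  fix c c' i assume h: "\<forall>ks\<in>tup n (n - 1). kappa q n c ks = kappa q n c' ks" and i: "i \<in> {1..n}"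
  have "omit n i \<in> tup n (n - 1)" using omit_props[OF i] by (auto simp: tup_def)
  then have "kappa q n c (omit n i) = kappa q n c' (omit n i)" using h by blast
  then have "c i * (- q) ^ i = c' i * (- q) ^ i" by (simp only: kappa_omit[OF i])
  then have "c i * (- q) ^ i * (- qi) ^ i = c' i * (- q) ^ i * (- qi) ^ i" by simp
  moreover have "(- q) ^ i * (- qi) ^ i = 1"
    by (simp add: power_mult_distrib[symmetric] assms(1))
  ultimately show "c i = c' i" by (simp add: mult.assoc)
qed

end
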